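(* Let $0<\nu<1$, $0\le\mu<1$ and $\lambda>0$. Then for every $t>0$, $$\int_\lambda^\infty \frac{(u-\lambda)^{\mu}}{\Gamma(\mu+1)}\,K_{\nu,\mu}(t,u)\,du=\lambda^{(1/\nu+1)\mu-1/\nu+1}\,f_{\nu,\nu+\nu\mu+\mu}\!\left(\frac{t}{\lambda^{1/\nu}}\right).$$
   Context: For $0<\nu<1$ and real $\rho$, $f_{\nu,\rho}(t)=\frac{1}{2\pi i}\int_{c-i\infty}^{c+i\infty}e^{st}s^{-\rho}e^{-s^{\nu}}\,ds$ ($t>0$, $c>0$, principal branches). For $\mu\ge0$, $u>0$, $K_{\nu,\mu}(t,u)=\frac{1}{2\pi i}\int_{c-i\infty}^{c+i\infty}e^{st}s^{-\mu}e^{-us^{\nu}}\,ds$, the inverse Laplace transform (in $t$) of $s^{-\mu}e^{-us^\nu}$. *)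

theory Defs
  imports "HOL-Analysis.Analysis"
begin

text \<open>Bromwich (inverse Laplace) integral along the vertical line Re s = c:
  (1/(2 pi i)) * integral over s = c + i y, y in R, of e^(s t) F(s) ds, with ds = i dy.
  Complex powers use Isabelle's principal branch (powr = exp (a * Ln s)).\<close>
definition bromwich :: "real \<Rightarrow> (complex \<Rightarrow> complex) \<Rightarrow> real \<Rightarrow> complex" where
  "bromwich c F t =
     (1 / (2 * pi * \<i>)) *
     (LINT y|lborel. exp ((Complex c y) * of_real t) * F (Complex c y) * \<i>)"

definition f_nr :: "real \<Rightarrow> real \<Rightarrow> real \<Rightarrow> real \<Rightarrow> complex" where
  "f_nr c \<nu> \<rho> t = bromwich c (\<lambda>s. s powr (- of_real \<rho>) * exp (- (s powr of_real \<nu>))) t"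

definition K_nm :: "real \<Rightarrow> real \<Rightarrow> real \<Rightarrow> real \<Rightarrow> real \<Rightarrow> complex" where
  "K_nm c \<nu> \<mu> t u = bromwich c (\<lambda>s. s powr (- of_real \<mu>) * exp (- of_real u * (s powr of_real \<nu>))) t"

end

theory Submission
  imports Defs "HOL-Complex_Analysis.Complex_Analysis" "HOL-Real_Asymp.Real_Asymp"
begin
lemma exp_powr_decay_bound:
  fixes k \<nu> :: real assumes k: "k > 0" and nu: "\<nu> > 0"
  shows "\<exists>C. \<forall>y::real. exp (- k * \<bar>y\<bar> powr \<nu>) \<le> C / (1 + y\<^sup>2)"
proof -
  define m :: nat where "m = nat \<lceil>2 / \<nu>\<rceil> + 1"
  have m0: "m > 0" by (simp add: m_def)
  have mnu: "real m * \<nu> \<ge> 2"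
  proof -
    have "real m \<ge> 2 / \<nu>" unfolding m_def by linarith
    then show ?thesis using nu by (simp add: field_simps)
  qed
  define C where "C = 2 + 2 * (real m / k) ^ m"
  have "exp (- k * \<bar>y\<bar> powr \<nu>) \<le> C / (1 + y\<^sup>2)" for y :: real
  proof (cases "\<bar>y\<bar> < 1")
    case True
    have "y\<^sup>2 \<le> 1" using True by (simp add: abs_square_le_1)
    moreover have "0 < 1 + y\<^sup>2" by (simp add: add_pos_nonneg)
    ultimately have "1 \<le> 2 / (1 + y\<^sup>2)" by (simp add: le_divide_eq)
    also have "2 / (1 + y\<^sup>2) \<le> C / (1 + y\<^sup>2)"
      using k by (intro divide_right_mono) (auto simp: C_def add_pos_nonneg)
    finally have "1 \<le> C / (1 + y\<^sup>2)" .
    moreover have "exp (- k * \<bar>y\<bar> powr \<nu>) \<le> 1" using k by simp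
    ultimately show ?thesis by linarith
  next
    case False
    define r where "r = \<bar>y\<bar> powr \<nu>"
    have r1: "r \<ge> 1" unfolding r_def using False nu by (simp add: ge_one_powr_ge_zero)
    have "(1 + k * r / real m) ^ m \<le> exp (k * r)"
    proof (rule exp_ge_one_plus_x_over_n_power_n[where x="k * r" and n=m])
      have "0 \<le> k * r" using k r1 by simp
      then show "- real m \<le> k * r" by linarith
    qed (rule m0)
    moreover have "(k * r / real m) ^ m \<le> (1 + k * r / real m) ^ m"
      using k r1 by (intro power_mono) auto
    ultimately have A: "(k * r / real m) ^ m \<le> exp (k * r)" by linarith
    have pos: "(k * r / real m) ^ m > 0" using k r1 m0 by simp
    have "exp (- k * r) = 1 / exp (k * r)" by (simp add: exp_minus field_simps)
    also have "\<dots> \<le> 1 / (k * r / real m) ^ m"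
      using A pos by (intro divide_left_mono) auto
    also have "\<dots> = (real m / k) ^ m / r ^ m"
      using k r1 m0 by (simp add: power_divide power_mult_distrib field_simps)
    finally have B: "exp (- k * r) \<le> (real m / k) ^ m / r ^ m" .
    have "r ^ m = \<bar>y\<bar> powr (\<nu> * real m)"
      unfolding r_def using False by (simp add: powr_realpow[symmetric] powr_powr)
    also have "\<dots> \<ge> \<bar>y\<bar> powr 2"
      using False mnu by (intro powr_mono) (auto simp: mult.commute)
    finally have "r ^ m \<ge> y\<^sup>2" using False by (simp add: powr_realpow)
    then have "(real m / k) ^ m / r ^ m \<le> (real m / k) ^ m / y\<^sup>2"
    proof (rule divide_left_mono)
      have "y\<^sup>2 > 0" using False by auto
      moreover have "r ^ m > 0" using r1 by simp
      ultimately show "0 < r ^ m * y\<^sup>2" by simp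
      show "0 \<le> (real m / k) ^ m" using k by simp
    qed
    also have "\<dots> \<le> 2 * (real m / k) ^ m / (1 + y\<^sup>2)"
    proof -
      have a1: "1 \<le> \<bar>y\<bar>" using False by simp
      have "1 * 1 \<le> \<bar>y\<bar> * \<bar>y\<bar>" by (rule mult_mono) (use a1 in auto)
      then have y1: "1 \<le> y\<^sup>2" by (simp add: power2_eq_square)
      define D where "D = (real m / k) ^ m"
      have D0: "0 \<le> D" unfolding D_def using k by simp
      have "D / y\<^sup>2 = (2 * D) / (2 * y\<^sup>2)" by simp
      also have "\<dots> \<le> (2 * D) / (1 + y\<^sup>2)"
      proof (rule divide_left_mono)
        show "1 + y\<^sup>2 \<le> 2 * y\<^sup>2" using y1 by simp
        show "0 \<le> 2 * D" using D0 by simp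
        show "0 < 2 * y\<^sup>2 * (1 + y\<^sup>2)" using y1 by (intro mult_pos_pos) auto
      qed
      finally show ?thesis unfolding D_def .
    qed
    also have "\<dots> \<le> C / (1 + y\<^sup>2)"
      by (intro divide_right_mono) (auto simp: C_def add_pos_nonneg)
    finally show ?thesis using B r_def by simp
  qed
  then show ?thesis by blast
qed

lemma integrable_exp_powr:
  fixes k \<nu> :: real assumes k: "k > 0" and nu: "\<nu> > 0"
  shows "integrable lborel (\<lambda>y::real. exp (- k * \<bar>y\<bar> powr \<nu>))"
proof -
  obtain C where C: "\<And>y::real. exp (- k * \<bar>y\<bar> powr \<nu>) \<le> C / (1 + y\<^sup>2)"
    using exp_powr_decay_bound[OF k nu] by blast
  have nz: "\<And>x::real. 1 + x * x \<noteq> 0" by (smt (verit) zero_le_square)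
  have I: "integrable lborel (\<lambda>x::real. 1 / (1 + x\<^sup>2))"
  proof -
    have "set_integrable lborel (einterval (-\<infinity>) \<infinity>) (\<lambda>x::real. 1 / (1 + x\<^sup>2))"
    proof (rule interval_integral_FTC_nonneg(1)[where F = arctan and A = "-pi/2" and B = "pi/2"])
      show "((arctan \<circ> real_of_ereal) \<longlongrightarrow> - pi / 2) (at_right (- \<infinity>))"
        by (simp add: at_right_MInf filterlim_filtermap o_def tendsto_arctan_at_bot)
      show "((arctan \<circ> real_of_ereal) \<longlongrightarrow> pi / 2) (at_left \<infinity>)"
        by (simp add: at_left_PInf filterlim_filtermap o_def tendsto_arctan_at_top)
    qed (auto intro!: derivative_eq_intros continuous_intros simp: nz add_pos_nonneg field_simps power2_eq_square)
    then show ?thesis by (simp add: set_integrable_def)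
  qed
  have B: "exp (- k * \<bar>x\<bar> powr \<nu>) \<le> \<bar>C\<bar> / (1 + x\<^sup>2)" for x :: real
  proof -
    have "C / (1 + x\<^sup>2) \<le> \<bar>C\<bar> / (1 + x\<^sup>2)"
      by (intro divide_right_mono) (auto simp: add_pos_nonneg)
    then show ?thesis using C[of x] by linarith
  qed
  have AE: "AE x in lborel. norm (exp (- k * \<bar>x\<bar> powr \<nu>)) \<le> norm (C * (1 / (1 + x\<^sup>2)))"
    using B by (intro AE_I2) (simp add: abs_mult add_pos_nonneg)
  have M: "(\<lambda>y. exp (- k * \<bar>y\<bar> powr \<nu>)) \<in> borel_measurable lborel" by measurable
  show ?thesis
    by (rule Bochner_Integration.integrable_bound[OF integrable_mult_right[OF I, of C] M AE])
qed

lemma Im_Ln_bound: "0 < Re s \<Longrightarrow> \<bar>Im (Ln s)\<bar> < pi / 2"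
  by (rule Re_Ln_pos_lt_imp)

lemma cpowr_real_eq: "s \<noteq> 0 \<Longrightarrow> s powr complex_of_real v = exp (of_real v * Ln s)"
  by (simp add: powr_def)

lemma Re_cpowr_ge:
  fixes s :: complex and \<nu> :: real
  assumes s: "0 < Re s" and nu: "0 \<le> \<nu>" "\<nu> \<le> 1"
  shows "Re (s powr of_real \<nu>) \<ge> cos (\<nu> * pi / 2) * norm s powr \<nu>"
proof -
  have s0: "s \<noteq> 0" using s by auto
  have "Re (s powr of_real \<nu>) = exp (\<nu> * ln (norm s)) * cos (\<nu> * Im (Ln s))"
    using s0 by (simp add: powr_def Re_exp Re_Ln)
  also have "exp (\<nu> * ln (norm s)) = norm s powr \<nu>"
    using s0 by (simp add: powr_def mult.commute)
  finally have eq: "Re (s powr of_real \<nu>) = norm s powr \<nu> * cos (\<nu> * Im (Ln s))" .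
  have h: "\<bar>Im (Ln s)\<bar> \<le> pi / 2" using Im_Ln_bound[OF s] by simp
  have "\<bar>\<nu> * Im (Ln s)\<bar> = \<nu> * \<bar>Im (Ln s)\<bar>" using nu by (simp add: abs_mult)
  also have "\<dots> \<le> \<nu> * (pi / 2)" by (rule mult_left_mono[OF h nu(1)])
  finally have b: "\<bar>\<nu> * Im (Ln s)\<bar> \<le> \<nu> * pi / 2" by simp
  have "cos (\<nu> * pi / 2) \<le> cos \<bar>\<nu> * Im (Ln s)\<bar>"
    by (rule cos_monotone_0_pi_le) (use b nu in auto)
  then have "cos (\<nu> * pi / 2) \<le> cos (\<nu> * Im (Ln s))" by simp
  then show ?thesis unfolding eq
    by (simp add: mult.commute mult_left_mono)
qed

lemma cos_nu_pos: "0 \<le> \<nu> \<Longrightarrow> \<nu> < 1 \<Longrightarrow> cos (\<nu> * pi / 2) > 0"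
proof (rule cos_gt_zero_pi)
  assume a: "0 \<le> \<nu>" "\<nu> < 1"
  have "0 \<le> \<nu> * pi / 2" using a by simp
  then show "- (pi / 2) < \<nu> * pi / 2" using pi_gt_zero by linarith
  have "\<nu> * pi < 1 * pi" using a pi_gt_zero by (intro mult_strict_right_mono) auto
  then show "\<nu> * pi / 2 < pi / 2" by simp
qed

lemma Re_cpowr_pos:
  fixes s :: complex and \<nu> :: real
  assumes s: "0 < Re s" and nu: "0 \<le> \<nu>" "\<nu> < 1"
  shows "Re (s powr of_real \<nu>) > 0"
proof -
  have "norm s > 0" using s by auto
  then have "cos (\<nu> * pi / 2) * norm s powr \<nu> > 0" using cos_nu_pos[OF nu] by simp
  then show ?thesis using Re_cpowr_ge[OF s nu(1)] nu by linarith
qed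

lemma norm_cpowr_real: "norm (s powr complex_of_real r) = norm s powr r"
  by (simp add: norm_powr_real_powr')

lemma cpowr_cpowr:
  fixes s w :: complex and \<nu> :: real
  assumes s: "0 < Re s" and nu: "0 \<le> \<nu>" "\<nu> \<le> 1"
  shows "(s powr of_real \<nu>) powr w = s powr (of_real \<nu> * w)"
proof -
  have s0: "s \<noteq> 0" using s by auto
  have b: "\<bar>\<nu> * Im (Ln s)\<bar> \<le> pi / 2"
  proof -
    have h: "\<bar>Im (Ln s)\<bar> \<le> pi / 2" using Im_Ln_bound[OF s] by simp
    have "\<bar>\<nu> * Im (Ln s)\<bar> = \<nu> * \<bar>Im (Ln s)\<bar>" using nu by (simp add: abs_mult)
    also have "\<dots> \<le> 1 * (pi / 2)" by (rule mult_mono) (use h nu in auto)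
    finally show ?thesis by simp
  qed
  have "Ln (s powr of_real \<nu>) = of_real \<nu> * Ln s"
  proof -
    have l: "- pi < Im (complex_of_real \<nu> * Ln s)" "Im (complex_of_real \<nu> * Ln s) \<le> pi"
    proof -
      have "- pi < \<nu> * Im (Ln s)" "\<nu> * Im (Ln s) \<le> pi" using b pi_gt_zero by linarith+
      then show "- pi < Im (complex_of_real \<nu> * Ln s)" "Im (complex_of_real \<nu> * Ln s) \<le> pi" by simp_all
    qed
    show ?thesis using s0 by (simp add: powr_def Ln_exp[OF l])
  qed
  then show ?thesis using s0 by (simp add: powr_def mult.assoc mult.left_commute)
qed

lemma cpowr_add: "(s::complex) powr (a + b) = s powr a * s powr b"
  by (simp add: powr_add)

lemma cpowr_scale:
  fixes a :: real and s w :: complex assumes "a > 0"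
  shows "(of_real a * s) powr w = of_real a powr w * s powr w"
  using assms by (intro powr_times_real_left) auto

definition gk :: "real \<Rightarrow> complex \<Rightarrow> real \<Rightarrow> complex" where
  "gk \<mu> w v = complex_of_real (v powr \<mu>) * exp (- w * complex_of_real v)"

lemma gk_measurable[measurable]: "gk \<mu> w \<in> borel_measurable borel"
  unfolding gk_def by measurable

lemma powr_exp_bound:
  fixes v \<mu> \<delta> :: real assumes "0 \<le> v" "0 \<le> \<mu>" "\<mu> \<le> 1" "0 < \<delta>"
  shows "v powr \<mu> \<le> (1 + 2 / \<delta>) * exp (\<delta> * v / 2)"
proof -
  have e1: "1 \<le> exp (\<delta> * v / 2)" using assms by simp
  have "\<delta> * v / 2 \<le> exp (\<delta> * v / 2)"
    using exp_ge_add_one_self[of "\<delta> * v / 2"] by linarith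
  then have e2: "v \<le> (2 / \<delta>) * exp (\<delta> * v / 2)" using assms by (simp add: field_simps)
  have "v powr \<mu> \<le> 1 + v"
  proof (cases "v \<le> 1")
    case True
    then have "v powr \<mu> \<le> 1 powr \<mu>" using assms by (intro powr_mono2) auto
    then have "v powr \<mu> \<le> 1" by simp
    then show ?thesis using assms by linarith
  next
    case False
    then have "v powr \<mu> \<le> v powr 1" using assms by (intro powr_mono) auto
    then show ?thesis using False by simp
  qed
  also have "\<dots> \<le> exp (\<delta> * v / 2) + (2 / \<delta>) * exp (\<delta> * v / 2)" using e1 e2 by linarith
  finally show ?thesis by (simp add: algebra_simps)
qed

lemma norm_gk_bound:
  assumes "0 \<le> v" "0 \<le> \<mu>" "\<mu> \<le> 1" "0 < \<delta>" "\<delta> \<le> Re w"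
  shows "norm (gk \<mu> w v) \<le> (1 + 2 / \<delta>) * exp (- (\<delta> / 2) * v)"
proof -
  have "norm (gk \<mu> w v) = v powr \<mu> * exp (- Re w * v)"
    using assms by (simp add: gk_def norm_mult)
  also have "\<dots> \<le> ((1 + 2 / \<delta>) * exp (\<delta> * v / 2)) * exp (- \<delta> * v)"
  proof (rule mult_mono)
    show "v powr \<mu> \<le> (1 + 2 / \<delta>) * exp (\<delta> * v / 2)" using powr_exp_bound assms by blast
    have "- Re w * v \<le> - \<delta> * v" using assms by (simp add: mult_right_mono)
    then show "exp (- Re w * v) \<le> exp (- \<delta> * v)" by simp
  qed (use assms in auto)
  also have "\<dots> = (1 + 2 / \<delta>) * exp (- (\<delta> / 2) * v)"
    by (simp add: mult.assoc exp_add[symmetric] algebra_simps)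
  finally show ?thesis .
qed

lemma set_integrable_exp_neg:
  fixes a c :: real assumes "a > 0"
  shows "set_integrable lborel {c..} (\<lambda>v. exp (- a * v))"
proof -
  have "(\<lambda>v. exp (- a * v)) integrable_on {c..}"
    using has_integral_exp_minus_to_infinity[OF assms, of c] by blast
  then have "(\<lambda>v. exp (- a * v)) absolutely_integrable_on {c..}"
    by (intro nonnegative_absolutely_integrable_1) auto
  then have L: "integrable lebesgue (\<lambda>v. indicat_real {c..} v *\<^sub>R exp (- a * v))"
    by (simp add: set_integrable_def)
  have m: "(\<lambda>v. indicat_real {c..} v *\<^sub>R exp (- a * v)) \<in> borel_measurable lborel" by measurable
  show ?thesis unfolding set_integrable_def using integrable_completion[OF m] L by simp
qed

lemma set_integrable_gk:
  assumes "0 \<le> \<mu>" "\<mu> \<le> 1" "0 < Re w" "S \<subseteq> {0..}" "S \<in> sets lborel"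
  shows "set_integrable lborel S (gk \<mu> w)"
proof -
  define \<delta> where "\<delta> = Re w"
  have d: "0 < \<delta>" "\<delta> \<le> Re w" using assms by (auto simp: \<delta>_def)
  have I: "set_integrable lborel {0..} (\<lambda>v. (1 + 2 / \<delta>) * exp (- (\<delta> / 2) * v))"
    using set_integrable_exp_neg[of "\<delta> / 2" 0] d
    by (intro set_integrable_mult_right) auto
  have I2: "set_integrable lborel {0..} (gk \<mu> w)"
    unfolding set_integrable_def
  proof (rule Bochner_Integration.integrable_bound[OF I[unfolded set_integrable_def]])
    show "(\<lambda>x. indicat_real {0..} x *\<^sub>R gk \<mu> w x) \<in> borel_measurable lborel" by measurable
    show "AE x in lborel. norm (indicat_real {0..} x *\<^sub>R gk \<mu> w x)
          \<le> norm (indicat_real {0..} x *\<^sub>R ((1 + 2 / \<delta>) * exp (- (\<delta> / 2) * x)))"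
      using norm_gk_bound[OF _ assms(1,2) d] d
      by (intro AE_I2) (auto split: split_indicator)
  qed
  show ?thesis by (rule set_integrable_subset[OF I2 assms(5) assms(4)])
qed

lemma abs_int_imp_lborel:
  fixes f :: "real \<Rightarrow> 'b::euclidean_space"
  assumes "f absolutely_integrable_on S" "S \<in> sets borel" "f \<in> borel_measurable borel"
  shows "set_integrable lborel S f"
proof -
  have m: "(\<lambda>v. indicat_real S v *\<^sub>R f v) \<in> borel_measurable lborel" using assms(2,3) by measurable
  show ?thesis using assms(1) unfolding set_integrable_def using integrable_completion[OF m] by simp
qed

lemma gk_real_integral:
  fixes x \<mu> :: real assumes x: "x > 0" and mu: "0 \<le> \<mu>"
  shows "(LINT v:{0..}|lborel. gk \<mu> (of_real x) v) = of_real (Gamma (\<mu> + 1) / x powr (\<mu> + 1))"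
proof -
  have H: "((\<lambda>t. t powr \<mu> / exp t) has_integral Gamma (\<mu> + 1)) {0..}"
    using Gamma_integral_real[of "\<mu> + 1"] mu by simp
  have "(\<lambda>t. t powr \<mu> / exp t) absolutely_integrable_on {0..}"
    using H by (intro nonnegative_absolutely_integrable_1) (auto simp: has_integral_integrable)
  then have SI: "set_integrable lborel {0..} (\<lambda>t. t powr \<mu> / exp t)"
    by (rule abs_int_imp_lborel) auto
  have G: "(LINT t:{0..}|lborel. t powr \<mu> / exp t) = Gamma (\<mu> + 1)"
    using set_borel_integral_eq_integral(2)[OF SI] H by (simp add: integral_unique)
  have "(LINT t:{0..}|lborel. t powr \<mu> / exp t)
        = \<bar>x\<bar> *\<^sub>R (LBINT v. indicat_real {0..} (0 + x * v) *\<^sub>R ((0 + x * v) powr \<mu> / exp (0 + x * v)))"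
    unfolding set_lebesgue_integral_def
    by (rule lborel_integral_real_affine) (use x in simp)
  also have "\<dots> = x * x powr \<mu> * (LBINT v. indicat_real {0..} v *\<^sub>R (v powr \<mu> * exp (- x * v)))"
  proof -
    have "(\<lambda>v. indicat_real {0..} (0 + x * v) *\<^sub>R ((0 + x * v) powr \<mu> / exp (0 + x * v)))
        = (\<lambda>v. x powr \<mu> * (indicat_real {0..} v *\<^sub>R (v powr \<mu> * exp (- x * v))))"
    proof
      fix v :: real
      show "indicat_real {0..} (0 + x * v) *\<^sub>R ((0 + x * v) powr \<mu> / exp (0 + x * v))
          = x powr \<mu> * (indicat_real {0..} v *\<^sub>R (v powr \<mu> * exp (- x * v)))"
        using x by (cases "v \<ge> 0") (auto simp: indicator_def powr_mult exp_minus field_simps zero_le_mult_iff)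
    qed
    then show ?thesis using x by simp
  qed
  finally have E: "x * x powr \<mu> * (LINT v:{0..}|lborel. v powr \<mu> * exp (- x * v)) = Gamma (\<mu> + 1)"
    using G by (simp add: set_lebesgue_integral_def)
  have xp: "x * x powr \<mu> = x powr (\<mu> + 1)" using x by (simp add: powr_add)
  have "(LINT v:{0..}|lborel. gk \<mu> (of_real x) v) = (LINT v:{0..}|lborel. complex_of_real (v powr \<mu> * exp (- x * v)))"
    by (simp add: gk_def exp_of_real[symmetric])
  also have "\<dots> = of_real (LINT v:{0..}|lborel. v powr \<mu> * exp (- x * v))"
    by (rule set_integral_complex_of_real)
  also have "(LINT v:{0..}|lborel. v powr \<mu> * exp (- x * v)) = Gamma (\<mu> + 1) / x powr (\<mu> + 1)"
    using E xp x by (simp add: field_simps)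
  finally show ?thesis .
qed

definition pcf :: "real \<Rightarrow> real \<Rightarrow> real" where
  "pcf \<mu> v = (if \<mu> = 0 then 1 else v powr \<mu>)"

lemma pcf_cont: "0 \<le> \<mu> \<Longrightarrow> continuous_on {0..} (pcf \<mu>)"
proof (cases "\<mu> = 0")
  case True then show ?thesis by (simp add: pcf_def)
next
  case False
  assume "0 \<le> \<mu>"
  then have "\<mu> > 0" using False by simp
  then have "continuous_on {0..} (\<lambda>v::real. v powr \<mu>)"
    by (intro continuous_on_powr') (auto intro: continuous_intros)
  then show ?thesis using False by (simp add: pcf_def)
qed

lemma hol_trunc:
  assumes mu: "0 \<le> \<mu>" and U: "convex U"
  shows "(\<lambda>w. integral (cbox 0 b) (\<lambda>v. of_real (pcf \<mu> v) * exp (- w * of_real v))) holomorphic_on U"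
proof (rule leibniz_rule_holomorphic[where fx = "\<lambda>w v. - of_real v * (of_real (pcf \<mu> v) * exp (- w * of_real v))"])
  have pc: "continuous_on (cbox 0 b) (pcf \<mu>)"
    by (rule continuous_on_subset[OF pcf_cont[OF mu]]) auto
  show "\<And>x t. x \<in> U \<Longrightarrow> t \<in> cbox 0 b \<Longrightarrow>
     ((\<lambda>x. complex_of_real (pcf \<mu> t) * exp (- x * complex_of_real t)) has_field_derivative
      - complex_of_real t * (complex_of_real (pcf \<mu> t) * exp (- x * complex_of_real t))) (at x within U)"
    by (auto intro!: derivative_eq_intros simp: algebra_simps)
  show "\<And>x. x \<in> U \<Longrightarrow> (\<lambda>v. complex_of_real (pcf \<mu> v) * exp (- x * complex_of_real v)) integrable_on cbox 0 b"
    by (intro integrable_continuous continuous_intros continuous_on_of_real pc)  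
  have pc2: "continuous_on (U \<times> cbox 0 b) (\<lambda>z. pcf \<mu> (snd z))"
    by (rule continuous_on_compose2[OF pc]) (auto intro: continuous_intros)
  show "continuous_on (U \<times> cbox 0 b) (\<lambda>(x, t). - complex_of_real t * (complex_of_real (pcf \<mu> t) * exp (- x * complex_of_real t)))"
    unfolding case_prod_beta
    by (intro continuous_intros pc2 continuous_on_of_real) 
qed (rule U)

definition Gm :: "real \<Rightarrow> complex \<Rightarrow> complex" where
  "Gm \<mu> w = integral {0..} (gk \<mu> w)"

lemma gk_integrable_on:
  assumes "0 \<le> \<mu>" "\<mu> \<le> 1" "0 < Re w" "S \<subseteq> {0..}" "S \<in> sets borel"
  shows "gk \<mu> w integrable_on S"
  using set_borel_integral_eq_integral(1)[OF set_integrable_gk[OF assms(1-4)]] assms(5) by simp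

lemma gk_tail_bound:
  assumes mu: "0 \<le> \<mu>" "\<mu> \<le> 1" and d: "0 < \<delta>" "\<delta> \<le> Re w" and a: "0 \<le> a"
  shows "norm (integral {a..} (gk \<mu> w)) \<le> (1 + 2 / \<delta>) * (exp (- (\<delta> / 2) * a) / (\<delta> / 2))"
proof -
  have hi: "((\<lambda>v. (1 + 2 / \<delta>) * exp (- (\<delta> / 2) * v)) has_integral (1 + 2 / \<delta>) * (exp (- (\<delta> / 2) * a) / (\<delta> / 2))) {a..}"
    using has_integral_exp_minus_to_infinity[of "\<delta> / 2" a] d by (intro has_integral_mult_right) auto
  have "norm (integral {a..} (gk \<mu> w)) \<le> integral {a..} (\<lambda>v. (1 + 2 / \<delta>) * exp (- (\<delta> / 2) * v))"
  proof (rule integral_norm_bound_integral)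
    show "gk \<mu> w integrable_on {a..}" using a d by (intro gk_integrable_on mu) auto
    show "(\<lambda>v. (1 + 2 / \<delta>) * exp (- (\<delta> / 2) * v)) integrable_on {a..}" using hi by blast
    show "\<And>x. x \<in> {a..} \<Longrightarrow> norm (gk \<mu> w x) \<le> (1 + 2 / \<delta>) * exp (- (\<delta> / 2) * x)"
      using a by (intro norm_gk_bound mu d) auto
  qed
  also have "\<dots> = (1 + 2 / \<delta>) * (exp (- (\<delta> / 2) * a) / (\<delta> / 2))" using hi by (rule integral_unique)
  finally show ?thesis .
qed

lemma trunc_eq:
  assumes "0 \<le> b"
  shows "integral (cbox 0 b) (\<lambda>v. of_real (pcf \<mu> v) * exp (- w * of_real v)) = integral {0..b} (gk \<mu> w)"
proof -
  have "integral {0..b} (gk \<mu> w) = integral {0..b} (\<lambda>v. of_real (pcf \<mu> v) * exp (- w * of_real v))"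
    by (rule integral_spike[of "{0}"]) (auto simp: gk_def pcf_def)
  then show ?thesis by simp
qed

lemma Gm_split:
  assumes mu: "0 \<le> \<mu>" "\<mu> \<le> 1" and w: "0 < Re w" and b: "0 \<le> b"
  shows "Gm \<mu> w = integral {0..b} (gk \<mu> w) + integral {b..} (gk \<mu> w)"
proof -
  have i1: "(gk \<mu> w has_integral integral {0..b} (gk \<mu> w)) {0..b}"
    using mu w b by (intro integrable_integral gk_integrable_on) auto
  have i2: "(gk \<mu> w has_integral integral {b..} (gk \<mu> w)) {b..}"
    using mu w b by (intro integrable_integral gk_integrable_on) auto
  have "(gk \<mu> w has_integral integral {0..b} (gk \<mu> w) + integral {b..} (gk \<mu> w)) ({0..b} \<union> {b..})"
    by (rule has_integral_Un[OF i1 i2]) (use b in \<open>auto intro: negligible_subset[OF negligible_sing[of b]]\<close>)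
  moreover have "{0..b} \<union> {b..} = {0::real..}" using b by auto
  ultimately show ?thesis unfolding Gm_def by (simp add: integral_unique)
qed

lemma Gm_holo:
  assumes mu: "0 \<le> \<mu>" "\<mu> \<le> 1"
  shows "Gm \<mu> holomorphic_on {w. 0 < Re w}"
proof -
  have "\<exists>f'. (Gm \<mu> has_field_derivative f') (at w0)" if w0: "0 < Re w0" for w0
  proof -
    define r where "r = Re w0 / 2"
    have r: "0 < r" using w0 by (simp add: r_def)
    have cb: "r \<le> Re w" if "w \<in> cball w0 r" for w
    proof -
      have "\<bar>Re (w0 - w)\<bar> \<le> cmod (w0 - w)" by (rule abs_Re_le_cmod)
      also have "\<dots> \<le> r" using that by (simp add: dist_norm)
      finally have "\<bar>Re (w0 - w)\<bar> \<le> r" .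
      then have "Re w0 - Re w \<le> r" by (simp add: abs_le_iff)
      then show ?thesis unfolding r_def by linarith
    qed
    define fn where "fn n w = integral (cbox 0 (real n)) (\<lambda>v. of_real (pcf \<mu> v) * exp (- w * of_real v))" for n :: nat and w :: complex
    have ev: "\<forall>\<^sub>F n in sequentially. continuous_on (cball w0 r) (fn n) \<and> fn n holomorphic_on ball w0 r"
    proof (intro always_eventually allI conjI)
      fix n :: nat
      have h: "fn n holomorphic_on cball w0 r" unfolding fn_def
        by (rule hol_trunc[OF mu(1) convex_cball])
      show "continuous_on (cball w0 r) (fn n)" by (rule holomorphic_on_imp_continuous_on[OF h])
      show "fn n holomorphic_on ball w0 r" by (rule holomorphic_on_subset[OF h ball_subset_cball])
    qed
    define B where "B n = (1 + 2 / r) * (exp (- (r / 2) * real n) / (r / 2))" for n :: nat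
    have B0: "B \<longlonglongrightarrow> 0" unfolding B_def using r by real_asymp
    have ul: "uniform_limit (cball w0 r) fn (Gm \<mu>) sequentially"
    proof (rule uniform_limitI)
      fix e :: real assume e: "0 < e"
      have "\<forall>\<^sub>F n in sequentially. B n < e" using order_tendstoD(2)[OF B0 e] .
      then show "\<forall>\<^sub>F n in sequentially. \<forall>x\<in>cball w0 r. dist (fn n x) (Gm \<mu> x) < e"
      proof (rule eventually_mono)
        fix n assume Bn: "B n < e"
        show "\<forall>x\<in>cball w0 r. dist (fn n x) (Gm \<mu> x) < e"
        proof
          fix w assume w: "w \<in> cball w0 r"
          have rw: "r \<le> Re w" using cb[OF w] .
          have "Gm \<mu> w = fn n w + integral {real n..} (gk \<mu> w)"
            unfolding fn_def trunc_eq[OF of_nat_0_le_iff]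
            by (rule Gm_split[OF mu]) (use r rw in auto)
          then have "dist (fn n w) (Gm \<mu> w) = norm (integral {real n..} (gk \<mu> w))"
            by (simp add: dist_norm)
          also have "\<dots> \<le> B n" unfolding B_def by (rule gk_tail_bound[OF mu r rw]) simp
          finally show "dist (fn n w) (Gm \<mu> w) < e" using Bn by simp
        qed
      qed
    qed
    obtain "Gm \<mu> holomorphic_on ball w0 r"
      by (rule holomorphic_uniform_limit[OF ev ul trivial_limit_sequentially])
    then show ?thesis using r by (simp add: holomorphic_on_open)
  qed
  then show ?thesis using open_halfspace_Re_gt[of 0] by (simp add: holomorphic_on_open)
qed

lemma Gm_real:
  assumes mu: "0 \<le> \<mu>" "\<mu> \<le> 1" and x: "0 < x"
  shows "Gm \<mu> (of_real x) = of_real (Gamma (\<mu> + 1)) * (of_real x) powr (- of_real (\<mu> + 1))"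
proof -
  have "Gm \<mu> (of_real x) = (LINT v:{0..}|lborel. gk \<mu> (of_real x) v)"
    unfolding Gm_def using x
    by (intro set_borel_integral_eq_integral(2)[symmetric] set_integrable_gk mu) auto
  also have "\<dots> = of_real (Gamma (\<mu> + 1) / x powr (\<mu> + 1))" by (rule gk_real_integral[OF x mu(1)])
  also have "\<dots> = of_real (Gamma (\<mu> + 1)) * (of_real x) powr (- of_real (\<mu> + 1))"
  proof -
    have "(of_real x :: complex) powr (- of_real (\<mu> + 1)) = of_real x powr (of_real (- (\<mu> + 1)))" by simp
    also have "\<dots> = of_real (x powr (- (\<mu> + 1)))" using x by (simp only: powr_of_real)
    also have "x powr (- (\<mu> + 1)) = 1 / x powr (\<mu> + 1)" by (rule powr_minus_divide)
    finally show ?thesis by (simp add: divide_inverse)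
  qed
  finally show ?thesis .
qed

lemma Gm_eq:
  assumes mu: "0 \<le> \<mu>" "\<mu> \<le> 1" and w: "0 < Re w"
  shows "Gm \<mu> w = of_real (Gamma (\<mu> + 1)) * w powr (- of_real (\<mu> + 1))"
proof -
  let ?S = "{w. 0 < Re w}"
  let ?f = "\<lambda>w. Gm \<mu> w - of_real (Gamma (\<mu> + 1)) * w powr (- of_real (\<mu> + 1))"
  have "?f w = 0"
  proof (rule analytic_continuation[where f = ?f and S = ?S and U = "of_real ` {0<..}" and \<xi> = 1])
    have "(\<lambda>w. w powr (- of_real (\<mu> + 1))) holomorphic_on ?S"
      by (intro holomorphic_intros) (auto simp: complex_nonpos_Reals_iff)
    then show "?f holomorphic_on ?S"
      by (intro holomorphic_intros Gm_holo mu) (auto simp: complex_nonpos_Reals_iff)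
    show "open ?S" by (rule open_halfspace_Re_gt)
    show "connected ?S" by (intro convex_connected convex_halfspace_Re_gt)
    show "of_real ` {0<..} \<subseteq> ?S" by auto
    show "1 \<in> ?S" by simp
    show "w \<in> ?S" using w by simp
    show "\<And>z. z \<in> of_real ` {0<..} \<Longrightarrow> ?f z = 0" using Gm_real[OF mu] by auto
    show "1 islimpt (of_real ` {0<..} :: complex set)"
    proof (rule islimpt_approachable[THEN iffD2], intro allI impI)
      fix e :: real assume e: "0 < e"
      have "dist (complex_of_real (1 + e / 2)) 1 = dist (1 + e / 2) (1::real)"
        by (metis dist_of_real of_real_1)
      also have "\<dots> = e / 2" using e by (simp add: dist_real_def)
      finally have d: "dist (complex_of_real (1 + e / 2)) 1 < e" using e by simp
      have n: "complex_of_real (1 + e / 2) \<noteq> 1" using e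
        by (metis add_cancel_right_right half_gt_zero less_irrefl of_real_1 of_real_eq_iff)
      have m: "complex_of_real (1 + e / 2) \<in> of_real ` {0<..}" using e by (intro imageI) auto
      show "\<exists>x'\<in>(of_real ` {0<..} :: complex set). x' \<noteq> 1 \<and> dist x' 1 < e"
        using d n m by blast
    qed
  qed
  then show ?thesis by simp
qed

lemma Complex_cont: "continuous_on A (Complex c)"
proof -
  have "Complex c = (\<lambda>y. of_real c + \<i> * of_real y)" by (auto simp: complex_eq_iff)
  then show ?thesis by (auto intro!: continuous_intros)
qed

lemma vert_linepath:
  fixes h :: "complex \<Rightarrow> complex"
  assumes R: "0 < R" and c: "0 < c" and cont: "continuous_on {z. 0 < Re z} h"
  shows "contour_integral (linepath (Complex c (-R)) (Complex c R)) h
         = \<i> * (LINT y:{-R..R}|lborel. h (Complex c y))"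
proof -
  let ?a = "Complex c (-R)" and ?b = "Complex c R"
  define \<psi> where "\<psi> x = h (Complex c (-R + 2 * R * x)) * (\<i> * of_real (2 * R))" for x
  have lp: "linepath ?a ?b x = Complex c (-R + 2 * R * x)" for x
  proof -
    have "Im ((1 - x) *\<^sub>R ?a + x *\<^sub>R ?b) = (1 - x) * (-R) + x * R" by simp
    also have "\<dots> = -R + 2 * R * x" by (simp add: algebra_simps)
    finally show ?thesis unfolding linepath_def by (simp add: complex_eq_iff algebra_simps)
  qed
  have ba: "?b - ?a = \<i> * of_real (2 * R)" by (simp add: complex_eq_iff)
  have "contour_integral (linepath ?a ?b) h = integral {0..1} \<psi>"
    unfolding contour_integral_integral vector_derivative_linepath_at lp ba \<psi>_def ..
  have cphi: "continuous_on UNIV (\<lambda>y. h (Complex c y))"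
    by (rule continuous_on_compose2[OF cont Complex_cont]) (use c in auto)
  have cpsi: "continuous_on UNIV \<psi>"
    unfolding \<psi>_def
    by (intro continuous_on_mult continuous_on_const continuous_on_compose2[OF cphi] continuous_on_add continuous_on_mult continuous_on_id) auto
  have si: "set_integrable lborel {0..1} \<psi>"
    unfolding set_integrable_def
    by (rule borel_integrable_compact) (auto intro: continuous_on_subset[OF cpsi])
  have "integral {0..1} \<psi> = (LINT x:{0..1}|lborel. \<psi> x)"
    by (rule set_borel_integral_eq_integral(2)[OF si, symmetric])
  also have "\<dots> = \<i> * (LINT y:{-R..R}|lborel. h (Complex c y))"
  proof -
    have "(LINT y:{-R..R}|lborel. h (Complex c y))
        = \<bar>2 * R\<bar> *\<^sub>R (LBINT x. indicat_real {-R..R} (-R + 2 * R * x) *\<^sub>R h (Complex c (-R + 2 * R * x)))"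
      unfolding set_lebesgue_integral_def
      by (rule lborel_integral_real_affine) (use R in simp)
    also have "(\<lambda>x. indicat_real {-R..R} (-R + 2 * R * x) *\<^sub>R h (Complex c (-R + 2 * R * x)))
             = (\<lambda>x. indicat_real {0..1} x *\<^sub>R h (Complex c (-R + 2 * R * x)))"
    proof
      fix x :: real
      have i1: "(-R \<le> -R + 2 * R * x) \<longleftrightarrow> 0 \<le> x" using R by (simp add: zero_le_mult_iff)
      have "(-R + 2 * R * x \<le> R) \<longleftrightarrow> 2 * R * x \<le> 2 * R * 1" by simp
      also have "\<dots> \<longleftrightarrow> x \<le> 1" using R by (intro mult_le_cancel_left_pos) simp
      finally have "(-R + 2 * R * x \<in> {-R..R}) \<longleftrightarrow> x \<in> {0..1}" using i1 by simp
      then show "indicat_real {-R..R} (-R + 2 * R * x) *\<^sub>R h (Complex c (-R + 2 * R * x))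
             = indicat_real {0..1} x *\<^sub>R h (Complex c (-R + 2 * R * x))"
        by (simp add: indicator_def)
    qed
    finally have e0: "(LINT y:{-R..R}|lborel. h (Complex c y))
       = \<bar>2 * R\<bar> *\<^sub>R (LBINT x. indicat_real {0..1} x *\<^sub>R h (Complex c (-R + 2 * R * x)))" .
    have e: "\<i> * (LINT y:{-R..R}|lborel. h (Complex c y))
       = (LBINT x. (\<i> * of_real (2 * R)) * (indicat_real {0..1} x *\<^sub>R h (Complex c (-R + 2 * R * x))))"
      unfolding e0 integral_mult_right_zero using R by (simp add: scaleR_conv_of_real)
    have "(LINT x:{0..1}|lborel. \<psi> x)
       = (LBINT x. (\<i> * of_real (2 * R)) * (indicat_real {0..1} x *\<^sub>R h (Complex c (-R + 2 * R * x))))"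
      unfolding set_lebesgue_integral_def \<psi>_def
      by (rule Bochner_Integration.integral_cong) (auto simp: indicator_def)
    then show ?thesis using e by simp
  qed
  finally show ?thesis
    using \<open>contour_integral (linepath ?a ?b) h = integral {0..1} \<psi>\<close> by simp
qed

lemma horiz_seg:
  assumes "z \<in> closed_segment (Complex x1 y0) (Complex x2 y0)"
  shows "Im z = y0" "min x1 x2 \<le> Re z" "Re z \<le> max x1 x2"
proof -
  obtain u where u: "0 \<le> u" "u \<le> 1" "z = (1 - u) *\<^sub>R Complex x1 y0 + u *\<^sub>R Complex x2 y0"
    using assms by (auto simp: in_segment)
  have im: "Im z = (1 - u) * y0 + u * y0" using u by simp
  then show "Im z = y0" by (simp add: algebra_simps)
  have re: "Re z = (1 - u) * x1 + u * x2" using u by simp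
  have "(1 - u) * min x1 x2 \<le> (1 - u) * x1" using u by (intro mult_left_mono) auto
  moreover have "u * min x1 x2 \<le> u * x2" using u by (intro mult_left_mono) auto
  ultimately show "min x1 x2 \<le> Re z" unfolding re by (simp add: algebra_simps)
  have "(1 - u) * x1 \<le> (1 - u) * max x1 x2" using u by (intro mult_left_mono) auto
  moreover have "u * x2 \<le> u * max x1 x2" using u by (intro mult_left_mono) auto
  ultimately show "Re z \<le> max x1 x2" unfolding re by (simp add: algebra_simps)
qed

lemma lint_sym_limit:
  fixes f :: "real \<Rightarrow> complex"
  assumes f: "integrable lborel f"
  shows "(\<lambda>n. LINT y:{- real n..real n}|lborel. f y) \<longlonglongrightarrow> (LBINT y. f y)"
  unfolding set_lebesgue_integral_def
proof (rule integral_dominated_convergence[where w = "\<lambda>y. norm (f y)"])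
  show "f \<in> borel_measurable lborel" using f by auto
  show "\<And>i. (\<lambda>y. indicat_real {- real i..real i} y *\<^sub>R f y) \<in> borel_measurable lborel"
    using f by auto
  show "integrable lborel (\<lambda>y. norm (f y))" using f by auto
  show "AE x in lborel. (\<lambda>i. indicat_real {- real i..real i} x *\<^sub>R f x) \<longlonglongrightarrow> f x"
  proof (rule AE_I2)
    fix x :: real
    obtain N :: nat where N: "\<bar>x\<bar> \<le> real N" using real_arch_simple by blast
    have "\<forall>\<^sub>F i in sequentially. indicat_real {- real i..real i} x *\<^sub>R f x = f x"
      using eventually_ge_at_top[of N]
      by eventually_elim (use N in \<open>auto simp: indicator_def abs_le_iff\<close>)
    then show "(\<lambda>i. indicat_real {- real i..real i} x *\<^sub>R f x) \<longlonglongrightarrow> f x"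
      by (rule tendsto_eventually)
  qed
  show "\<And>i. AE x in lborel. norm (indicat_real {- real i..real i} x *\<^sub>R f x) \<le> norm (f x)"
    by (intro AE_I2) (auto simp: indicator_def)
qed

lemma contour_shift:
  fixes h :: "complex \<Rightarrow> complex"
  assumes hol: "h holomorphic_on {z. 0 < Re z}"
    and c: "0 < c" "c \<le> c'"
    and int1: "integrable lborel (\<lambda>y. h (Complex c y))"
    and int2: "integrable lborel (\<lambda>y. h (Complex c' y))"
    and dec: "\<And>e. 0 < e \<Longrightarrow> \<exists>R0. \<forall>x y. c \<le> x \<longrightarrow> x \<le> c' \<longrightarrow> R0 \<le> \<bar>y\<bar> \<longrightarrow> norm (h (Complex x y)) \<le> e"
  shows "(LBINT y. h (Complex c y)) = (LBINT y. h (Complex c' y))"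
proof -
  let ?H = "{z. 0 < Re z}"
  have cont: "continuous_on ?H h" by (rule holomorphic_on_imp_continuous_on[OF hol])
  have cvx: "convex ?H" by (rule convex_halfspace_Re_gt)
  define V where "V x R = (LINT y:{-R..R}|lborel. h (Complex x y))" for x R :: real
  define I1 where "I1 R = contour_integral (linepath (Complex c (-R)) (Complex c' (-R))) h" for R
  define I3 where "I3 R = contour_integral (linepath (Complex c' R) (Complex c R)) h" for R
  have seg: "closed_segment p q \<subseteq> ?H" if "0 < Re p" "0 < Re q" for p q
    by (rule closed_segment_subset) (use that cvx in auto)
  have hci: "(h has_contour_integral contour_integral (linepath p q) h) (linepath p q)"
    if "0 < Re p" "0 < Re q" for p q
    by (intro has_contour_integral_integral contour_integrable_continuous_linepath
        continuous_on_subset[OF cont seg]) (use that in auto)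
  have key: "\<i> * (V c' R - V c R) = - (I1 R + I3 R)" if R: "0 < R" for R
  proof -
    let ?a = "Complex c (-R)" and ?b = "Complex c' (-R)" and ?C = "Complex c' R" and ?D = "Complex c R"
    have pos: "0 < Re ?a" "0 < Re ?b" "0 < Re ?C" "0 < Re ?D" using c by auto
    let ?g = "linepath ?a ?b +++ (linepath ?b ?C +++ (linepath ?C ?D +++ linepath ?D ?a))"
    have "(h has_contour_integral 0) ?g"
    proof (rule Cauchy_theorem_convex_simple[OF hol cvx])
      show "valid_path ?g" by (auto intro!: valid_path_join)
      show "path_image ?g \<subseteq> ?H"
        using seg pos by (auto simp: path_image_join)
      show "pathfinish ?g = pathstart ?g" by simp
    qed
    moreover have "(h has_contour_integral
        (contour_integral (linepath ?a ?b) h + (contour_integral (linepath ?b ?C) h +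
         (contour_integral (linepath ?C ?D) h + contour_integral (linepath ?D ?a) h)))) ?g"
      using pos by (intro has_contour_integral_join hci) (auto intro!: valid_path_join)
    ultimately have sum0: "contour_integral (linepath ?a ?b) h + (contour_integral (linepath ?b ?C) h +
         (contour_integral (linepath ?C ?D) h + contour_integral (linepath ?D ?a) h)) = 0"
      using has_contour_integral_unique by blast
    have v2: "contour_integral (linepath ?b ?C) h = \<i> * V c' R"
      unfolding V_def by (rule vert_linepath[OF R _ cont]) (use c in auto)
    have v4: "contour_integral (linepath ?D ?a) h = - (\<i> * V c R)"
    proof -
      have "contour_integral (linepath ?D ?a) h = - contour_integral (linepath ?a ?D) h"
        by (rule contour_integral_reverse_linepath, rule continuous_on_subset[OF cont seg]) (use pos in auto)
      also have "contour_integral (linepath ?a ?D) h = \<i> * V c R"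
        unfolding V_def by (rule vert_linepath[OF R _ cont]) (use c in auto)
      finally show ?thesis .
    qed
    show ?thesis using sum0 unfolding v2 v4 I1_def I3_def by (simp add: algebra_simps)
  qed
  have bound: "norm (I1 R + I3 R) \<le> 2 * e * (c' - c)"
    if R: "0 < R" and e: "0 < e" and R0: "\<forall>x y. c \<le> x \<longrightarrow> x \<le> c' \<longrightarrow> R0 \<le> \<bar>y\<bar> \<longrightarrow> norm (h (Complex x y)) \<le> e"
      and RR: "R0 \<le> R" for R e R0
  proof -
    have b1: "norm (I1 R) \<le> e * (c' - c)"
    proof -
      have "norm (I1 R) \<le> e * norm (Complex c' (-R) - Complex c (-R))"
        unfolding I1_def
      proof (rule contour_integral_bound_linepath)
        show "h contour_integrable_on linepath (Complex c (- R)) (Complex c' (- R))"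
          using hci[of "Complex c (-R)" "Complex c' (-R)"] c by (auto simp: has_contour_integral_integrable)
        show "0 \<le> e" using e by simp
        fix z assume z: "z \<in> closed_segment (Complex c (- R)) (Complex c' (- R))"
        have "z = Complex (Re z) (Im z)" by simp
        moreover have "norm (h (Complex (Re z) (Im z))) \<le> e"
          using R0 horiz_seg[OF z] c RR R by auto
        ultimately show "norm (h z) \<le> e" by metis
      qed
      also have "norm (Complex c' (-R) - Complex c (-R)) = c' - c"
      proof -
        have "Complex c' (-R) - Complex c (-R) = of_real (c' - c)" by (simp add: complex_eq_iff)
        then show ?thesis using c by (simp only: norm_of_real)
      qed
      finally show ?thesis .
    qed
    have b3: "norm (I3 R) \<le> e * (c' - c)"
    proof -
      have "norm (I3 R) \<le> e * norm (Complex c R - Complex c' R)"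
        unfolding I3_def
      proof (rule contour_integral_bound_linepath)
        show "h contour_integrable_on linepath (Complex c' R) (Complex c R)"
          using hci[of "Complex c' R" "Complex c R"] c by (auto simp: has_contour_integral_integrable)
        show "0 \<le> e" using e by simp
        fix z assume z: "z \<in> closed_segment (Complex c' R) (Complex c R)"
        have "z = Complex (Re z) (Im z)" by simp
        moreover have "norm (h (Complex (Re z) (Im z))) \<le> e"
          using R0 horiz_seg[OF z] c RR R by auto
        ultimately show "norm (h z) \<le> e" by metis
      qed
      also have "norm (Complex c R - Complex c' R) = c' - c"
      proof -
        have "Complex c R - Complex c' R = of_real (c - c')" by (simp add: complex_eq_iff)
        then show ?thesis using c by (simp only: norm_of_real)
      qed
      finally show ?thesis .
    qed
    have "norm (I1 R + I3 R) \<le> norm (I1 R) + norm (I3 R)" by (rule norm_triangle_ineq)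
    also have "\<dots> \<le> 2 * e * (c' - c)" using b1 b3 by simp
    finally show ?thesis .
  qed
  have E0: "(\<lambda>n. I1 (real n) + I3 (real n)) \<longlonglongrightarrow> 0"
  proof (rule LIMSEQ_I)
    fix r :: real assume r: "0 < r"
    define e where "e = r / (2 * (c' - c) + 2)"
    have e: "0 < e" using r c by (simp add: e_def)
    obtain R0 where R0: "\<forall>x y. c \<le> x \<longrightarrow> x \<le> c' \<longrightarrow> R0 \<le> \<bar>y\<bar> \<longrightarrow> norm (h (Complex x y)) \<le> e"
      using dec[OF e] by blast
    obtain N :: nat where N: "max 1 R0 \<le> real N" using real_arch_simple by blast
    have "norm (I1 (real n) + I3 (real n) - 0) < r" if n: "N \<le> n" for n
    proof -
      have nN: "real N \<le> real n" using n by simp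
      have "norm (I1 (real n) + I3 (real n)) \<le> 2 * e * (c' - c)"
        by (rule bound[OF _ e R0]) (use N nN in auto)
      also have "\<dots> < r"
      proof -
        have "2 * e * (c' - c) < e * (2 * (c' - c) + 2)" using e by (simp add: algebra_simps)
        also have "\<dots> = r" using c by (simp add: e_def)
        finally show ?thesis .
      qed
      finally show ?thesis by simp
    qed
    then show "\<exists>no. \<forall>n\<ge>no. norm (I1 (real n) + I3 (real n) - 0) < r" by blast
  qed
  have L: "(\<lambda>n. \<i> * (V c' (real n) - V c (real n))) \<longlonglongrightarrow> \<i> * ((LBINT y. h (Complex c' y)) - (LBINT y. h (Complex c y)))"
    unfolding V_def by (intro tendsto_intros lint_sym_limit int1 int2)
  have ev: "\<forall>\<^sub>F n in sequentially. - (I1 (real n) + I3 (real n)) = \<i> * (V c' (real n) - V c (real n))"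
    using eventually_ge_at_top[of 1] by eventually_elim (rule key[symmetric], simp)
  have "(\<lambda>n. \<i> * (V c' (real n) - V c (real n))) \<longlonglongrightarrow> - 0"
    by (rule Lim_transform_eventually[OF tendsto_minus[OF E0] ev])
  with L have "\<i> * ((LBINT y. h (Complex c' y)) - (LBINT y. h (Complex c y))) = 0"
    using LIMSEQ_unique by fastforce
  then show ?thesis by simp
qed

lemma bromwich_scale:
  fixes a c \<nu> \<rho> t :: real
  assumes a: "0 < a"
  shows "f_nr c \<nu> \<rho> (t / a) = of_real (a powr (1 - \<rho>)) *
     bromwich (c / a) (\<lambda>s. s powr (- of_real \<rho>) * exp (- of_real (a powr \<nu>) * s powr of_real \<nu>)) t"
proof -
  define g where "g y = exp (Complex c y * of_real (t / a)) * (Complex c y powr (- of_real \<rho>) * exp (- (Complex c y powr of_real \<nu>))) * \<i>" for y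
  define k where "k y = exp (Complex (c / a) y * of_real t) * (Complex (c / a) y powr (- of_real \<rho>) * exp (- of_real (a powr \<nu>) * Complex (c / a) y powr of_real \<nu>)) * \<i>" for y
  have sc: "Complex c (a * y) = of_real a * Complex (c / a) y" for y
    using a by (simp add: complex_eq_iff)
  have gk: "g (0 + a * y) = of_real (a powr (- \<rho>)) * k y" for y
  proof -
    let ?s = "Complex (c / a) y"
    have e1: "exp (of_real a * ?s * of_real (t / a)) = exp (?s * of_real t)"
      using a by (simp add: field_simps)
    have e2: "(of_real a * ?s) powr (- of_real \<rho>) = of_real (a powr (- \<rho>)) * ?s powr (- of_real \<rho>)"
      using a by (simp add: cpowr_scale powr_of_real[symmetric])
    have e3: "(of_real a * ?s) powr (of_real \<nu>) = of_real (a powr \<nu>) * ?s powr (of_real \<nu>)"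
      using a by (simp add: cpowr_scale powr_of_real[symmetric])
    have "g (0 + a * y) = exp (of_real a * ?s * of_real (t / a)) * ((of_real a * ?s) powr (- of_real \<rho>)
        * exp (- ((of_real a * ?s) powr of_real \<nu>))) * \<i>"
      unfolding g_def by (simp only: add_0_left sc)
    also have "\<dots> = of_real (a powr (- \<rho>)) * k y"
      unfolding e1 e2 e3 k_def by (simp add: mult_ac)
    finally show ?thesis .
  qed
  have "(LBINT y. g y) = \<bar>a\<bar> *\<^sub>R (LBINT y. g (0 + a * y))"
    by (rule lborel_integral_real_affine) (use a in simp)
  also have "\<dots> = of_real a * (of_real (a powr (- \<rho>)) * (LBINT y. k y))"
    unfolding gk using a by (simp add: scaleR_conv_of_real)
  also have "\<dots> = of_real (a powr (1 - \<rho>)) * (LBINT y. k y)"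
  proof -
    have "a * a powr (- \<rho>) = a powr (1 - \<rho>)" using a by (simp add: powr_diff powr_minus divide_inverse)
    then show ?thesis by (simp flip: of_real_mult)
  qed
  finally have "(LBINT y. g y) = of_real (a powr (1 - \<rho>)) * (LBINT y. k y)" .
  then show ?thesis unfolding f_nr_def bromwich_def g_def k_def by (simp add: mult_ac)
qed

definition kap :: "real \<Rightarrow> real" where "kap \<nu> = cos (\<nu> * pi / 2)"

lemma kap_pos: "0 \<le> \<nu> \<Longrightarrow> \<nu> < 1 \<Longrightarrow> kap \<nu> > 0"
  unfolding kap_def by (rule cos_nu_pos)

lemma norm_exp_st: "norm (exp (Complex x y * of_real t)) = exp (x * t)"
  by simp

lemma norm_Complex_ge: "\<bar>x\<bar> \<le> norm (Complex x y)" "\<bar>y\<bar> \<le> norm (Complex x y)"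
  using abs_Re_le_cmod[of "Complex x y"] abs_Im_le_cmod[of "Complex x y"] by simp_all

lemma norm_powr_neg_le1:
  assumes "0 < x" "0 \<le> r"
  shows "norm (Complex x y powr (- of_real r)) \<le> x powr (- r)"
proof -
  have "norm (Complex x y powr (- of_real r)) = norm (Complex x y) powr (- r)"
    using norm_cpowr_real[of "Complex x y" "- r"] by simp
  also have "\<dots> \<le> x powr (- r)"
    using assms norm_Complex_ge(1)[of x y] by (intro powr_mono2') auto
  finally show ?thesis .
qed

lemma norm_powr_neg_le2:
  assumes "y \<noteq> 0" "0 \<le> r"
  shows "norm (Complex x y powr (- of_real r)) \<le> \<bar>y\<bar> powr (- r)"
proof -
  have "norm (Complex x y powr (- of_real r)) = norm (Complex x y) powr (- r)"
    using norm_cpowr_real[of "Complex x y" "- r"] by simp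
  also have "\<dots> \<le> \<bar>y\<bar> powr (- r)"
    using assms norm_Complex_ge(2)[of y x] by (intro powr_mono2') auto
  finally show ?thesis .
qed

lemma norm_exp_rate_le:
  assumes "0 < x" "0 \<le> u" "0 \<le> \<nu>" "\<nu> < 1"
  shows "norm (exp (- of_real u * Complex x y powr of_real \<nu>)) \<le> exp (- (u * kap \<nu>) * \<bar>y\<bar> powr \<nu>)"
proof -
  let ?s = "Complex x y"
  have "norm (exp (- of_real u * ?s powr of_real \<nu>)) = exp (- u * Re (?s powr of_real \<nu>))"
    by simp
  also have "\<dots> \<le> exp (- (u * kap \<nu>) * \<bar>y\<bar> powr \<nu>)"
  proof -
    have "kap \<nu> * \<bar>y\<bar> powr \<nu> \<le> kap \<nu> * norm ?s powr \<nu>"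
      using kap_pos[of \<nu>] assms norm_Complex_ge(2)[of y x]
      by (intro mult_left_mono powr_mono2) auto
    also have "\<dots> \<le> Re (?s powr of_real \<nu>)"
      unfolding kap_def by (rule Re_cpowr_ge) (use assms in auto)
    finally have "kap \<nu> * \<bar>y\<bar> powr \<nu> \<le> Re (?s powr of_real \<nu>)" .
    then have "u * (kap \<nu> * \<bar>y\<bar> powr \<nu>) \<le> u * Re (?s powr of_real \<nu>)"
      using assms by (intro mult_left_mono) auto
    then show ?thesis by (simp add: mult.assoc)
  qed
  finally show ?thesis .
qed

definition bI :: "real \<Rightarrow> real \<Rightarrow> real \<Rightarrow> real \<Rightarrow> complex \<Rightarrow> complex" where
  "bI t r u \<nu> s = exp (s * of_real t) * (s powr (- of_real r) * exp (- of_real u * s powr of_real \<nu>))"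

lemma bI_bound1:
  assumes "0 < x" "0 \<le> r" "0 \<le> u" "0 \<le> \<nu>" "\<nu> < 1"
  shows "norm (bI t r u \<nu> (Complex x y)) \<le> exp (x * t) * x powr (- r) * exp (- (u * kap \<nu>) * \<bar>y\<bar> powr \<nu>)"
  unfolding bI_def norm_mult norm_exp_st mult.assoc
  using norm_powr_neg_le1[OF assms(1,2), of y] norm_exp_rate_le[OF assms(1,3,4,5), of y]
  by (intro mult_left_mono mult_mono) auto

lemma bI_bound2:
  assumes "0 < x" "0 \<le> r" "0 \<le> u" "0 \<le> \<nu>" "\<nu> < 1" "y \<noteq> 0"
  shows "norm (bI t r u \<nu> (Complex x y)) \<le> exp (x * t) * \<bar>y\<bar> powr (- r)"
proof -
  have k: "0 \<le> (u * kap \<nu>) * \<bar>y\<bar> powr \<nu>"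
    using kap_pos[OF assms(4,5)] assms by simp
  have n1: "norm (exp (- of_real u * Complex x y powr of_real \<nu>)) \<le> 1"
    using norm_exp_rate_le[OF assms(1,3,4,5), of y] k by simp
  have n2: "norm (Complex x y powr (- of_real r)) \<le> \<bar>y\<bar> powr (- r)"
    by (rule norm_powr_neg_le2[OF assms(6,2)])
  have "norm (Complex x y powr (- of_real r)) * norm (exp (- of_real u * Complex x y powr of_real \<nu>))
        \<le> \<bar>y\<bar> powr (- r) * 1"
    by (rule mult_mono[OF n2 n1]) auto
  then show ?thesis
    unfolding bI_def norm_mult norm_exp_st mult.assoc
    by (intro mult_left_mono) auto
qed

lemma bI_measurable[measurable]: "(\<lambda>y. bI t r u \<nu> (Complex x y)) \<in> borel_measurable borel"
proof -
  have "Complex x = (\<lambda>y. of_real x + \<i> * of_real y)" by (auto simp: complex_eq_iff)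
  then show ?thesis unfolding bI_def by simp
qed

lemma bI_integrable:
  assumes "0 < x" "0 \<le> r" "0 < u" "0 < \<nu>" "\<nu> < 1"
  shows "integrable lborel (\<lambda>y. bI t r u \<nu> (Complex x y))"
proof (rule Bochner_Integration.integrable_bound)
  show "integrable lborel (\<lambda>y. (exp (x * t) * x powr (- r)) * exp (- (u * kap \<nu>) * \<bar>y\<bar> powr \<nu>))"
    using kap_pos[of \<nu>] assms by (intro integrable_mult_right integrable_exp_powr) auto
  show "(\<lambda>y. bI t r u \<nu> (Complex x y)) \<in> borel_measurable lborel" by simp
  show "AE y in lborel. norm (bI t r u \<nu> (Complex x y)) \<le> norm ((exp (x * t) * x powr (- r)) * exp (- (u * kap \<nu>) * \<bar>y\<bar> powr \<nu>))"
    using bI_bound1[OF assms(1,2) _ _ assms(5)] assms by (intro AE_I2) (auto simp: mult.assoc)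
qed

lemma bI_holo:
  "bI t r u \<nu> holomorphic_on {z. 0 < Re z}"
  unfolding bI_def by (intro holomorphic_intros) (auto simp: complex_nonpos_Reals_iff)

lemma bI_decay:
  assumes c: "0 < c" and r: "0 < r" "0 \<le> u" "0 \<le> \<nu>" "\<nu> < 1" and e: "0 < e"
  shows "\<exists>R0. \<forall>x y. c \<le> x \<longrightarrow> x \<le> c' \<longrightarrow> R0 \<le> \<bar>y\<bar> \<longrightarrow> norm (bI t r u \<nu> (Complex x y)) \<le> e"
proof -
  define M where "M = exp (c * t) + exp (c' * t)"
  have M: "0 < M" by (simp add: M_def add_pos_pos)
  define R0 where "R0 = (M / e) powr (1 / r)"
  have R0: "0 < R0" using M e by (simp add: R0_def)
  have R0r: "R0 powr (- r) = e / M"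
    using M e r by (simp add: R0_def powr_powr powr_minus_divide divide_inverse) 
  have "norm (bI t r u \<nu> (Complex x y)) \<le> e" if x: "c \<le> x" "x \<le> c'" and y: "R0 \<le> \<bar>y\<bar>" for x y
  proof -
    have y0: "y \<noteq> 0" using y R0 by auto
    have "norm (bI t r u \<nu> (Complex x y)) \<le> exp (x * t) * \<bar>y\<bar> powr (- r)"
      by (rule bI_bound2) (use c x r y0 in auto)
    also have "\<dots> \<le> M * R0 powr (- r)"
    proof (rule mult_mono)
      have "exp (x * t) \<le> exp (c * t) \<or> exp (x * t) \<le> exp (c' * t)"
      proof (cases "t \<ge> 0")
        case True then have "x * t \<le> c' * t" using x by (intro mult_right_mono) auto
        then show ?thesis by simp
      next
        case False then have "x * t \<le> c * t" using x by (intro mult_right_mono_neg) auto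
        then show ?thesis by simp
      qed
      then show "exp (x * t) \<le> M" unfolding M_def
        using exp_gt_zero[of "c * t"] exp_gt_zero[of "c' * t"] by linarith
      show "\<bar>y\<bar> powr - r \<le> R0 powr - r" using y R0 r by (intro powr_mono2') auto
    qed (use M in auto)
    also have "\<dots> = e" using R0r M by simp
    finally show ?thesis .
  qed
  then show ?thesis by blast
qed

lemma bromwich_bI:
  "bromwich c (\<lambda>s. s powr (- of_real r) * exp (- of_real u * s powr of_real \<nu>)) t
   = (1 / (2 * pi * \<i>)) * ((LBINT y. bI t r u \<nu> (Complex c y)) * \<i>)"
proof -
  have e: "(LBINT y. bI t r u \<nu> (Complex c y)) * \<i> = (LBINT y. bI t r u \<nu> (Complex c y) * \<i>)"
    by (rule integral_mult_left_zero[symmetric])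
  show ?thesis unfolding e unfolding bromwich_def bI_def by (simp only: mult.assoc)
qed

lemma bI_shift_le:
  assumes c: "0 < c" "c \<le> c'" and p: "0 < r" "0 < u" "0 < \<nu>" "\<nu> < 1"
  shows "(LBINT y. bI t r u \<nu> (Complex c y)) = (LBINT y. bI t r u \<nu> (Complex c' y))"
proof (rule contour_shift[OF bI_holo c])
  show "integrable lborel (\<lambda>y. bI t r u \<nu> (Complex c y))" using c p by (intro bI_integrable) auto
  show "integrable lborel (\<lambda>y. bI t r u \<nu> (Complex c' y))" using c p by (intro bI_integrable) auto
  show "\<And>e. 0 < e \<Longrightarrow> \<exists>R0. \<forall>x y. c \<le> x \<longrightarrow> x \<le> c' \<longrightarrow> R0 \<le> \<bar>y\<bar> \<longrightarrow> cmod (bI t r u \<nu> (Complex x y)) \<le> e"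
    using c p by (intro bI_decay) auto
qed

lemma bromwich_shift:
  assumes c: "0 < c" "0 < c'" and p: "0 < r" "0 < u" "0 < \<nu>" "\<nu> < 1"
  shows "bromwich c (\<lambda>s. s powr (- of_real r) * exp (- of_real u * s powr of_real \<nu>)) t
       = bromwich c' (\<lambda>s. s powr (- of_real r) * exp (- of_real u * s powr of_real \<nu>)) t"
proof (cases "c \<le> c'")
  case True then show ?thesis unfolding bromwich_bI using bI_shift_le[OF c(1) True p] by simp
next
  case False then show ?thesis unfolding bromwich_bI using bI_shift_le[OF c(2) _ p, of c] by simp
qed

lemma inner_u_integral:
  fixes s :: complex
  assumes s: "0 < Re s" and mu: "0 \<le> \<mu>" "\<mu> \<le> 1" and nu: "0 < \<nu>" "\<nu> < 1" and lam: "0 < lam"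
  shows "(LBINT u. indicat_real {lam..} u *\<^sub>R (of_real ((u - lam) powr \<mu> / Gamma (\<mu> + 1)) * bI t \<mu> u \<nu> s))
         = bI t (\<nu> + \<nu> * \<mu> + \<mu>) lam \<nu> s"
proof -
  define w where "w = s powr of_real \<nu>"
  have w: "0 < Re w" unfolding w_def using Re_cpowr_pos[OF s, of \<nu>] nu by simp
  define E where "E = exp (s * of_real t) * s powr (- of_real \<mu>)"
  have g0: "Gamma (\<mu> + 1) > 0" using mu by (intro Gamma_real_pos) auto
  have "(LBINT u. indicat_real {lam..} u *\<^sub>R (of_real ((u - lam) powr \<mu> / Gamma (\<mu> + 1)) * bI t \<mu> u \<nu> s))
      = (LBINT u. (E / of_real (Gamma (\<mu> + 1))) * (indicat_real {lam..} u *\<^sub>R (of_real ((u - lam) powr \<mu>) * exp (- of_real u * w))))"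
    by (rule Bochner_Integration.integral_cong) (auto simp: bI_def E_def w_def indicator_def)
  also have "\<dots> = (E / of_real (Gamma (\<mu> + 1))) * (LBINT u. indicat_real {lam..} u *\<^sub>R (of_real ((u - lam) powr \<mu>) * exp (- of_real u * w)))"
    by (rule integral_mult_right_zero)
  also have "(LBINT u. indicat_real {lam..} u *\<^sub>R (of_real ((u - lam) powr \<mu>) * exp (- of_real u * w)))
      = \<bar>1\<bar> *\<^sub>R (LBINT v. indicat_real {lam..} (lam + 1 * v) *\<^sub>R (of_real ((lam + 1 * v - lam) powr \<mu>) * exp (- of_real (lam + 1 * v) * w)))"
    by (rule lborel_integral_real_affine) simp
  also have "\<dots> = (LBINT v. exp (- of_real lam * w) * (indicat_real {0..} v *\<^sub>R gk \<mu> w v))"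
    unfolding abs_one scaleR_one
    by (rule Bochner_Integration.integral_cong) (auto simp: gk_def indicator_def algebra_simps exp_add[symmetric])
  also have "\<dots> = exp (- of_real lam * w) * (LINT v:{0..}|lborel. gk \<mu> w v)"
    unfolding set_lebesgue_integral_def by (rule integral_mult_right_zero)
  also have "(LINT v:{0..}|lborel. gk \<mu> w v) = Gm \<mu> w"
    unfolding Gm_def by (rule set_borel_integral_eq_integral(2)[OF set_integrable_gk[OF mu w]]) auto
  also have "\<dots> = of_real (Gamma (\<mu> + 1)) * w powr (- of_real (\<mu> + 1))" by (rule Gm_eq[OF mu w])
  also have "w powr (- of_real (\<mu> + 1)) = s powr (of_real \<nu> * (- of_real (\<mu> + 1)))"
    unfolding w_def by (rule cpowr_cpowr[OF s]) (use nu in auto)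
  finally have "(LBINT u. indicat_real {lam..} u *\<^sub>R (of_real ((u - lam) powr \<mu> / Gamma (\<mu> + 1)) * bI t \<mu> u \<nu> s))
     = exp (s * of_real t) * (s powr (- of_real \<mu>) * s powr (of_real \<nu> * (- of_real (\<mu> + 1)))) * exp (- of_real lam * w)"
    using g0 unfolding E_def by (simp add: field_simps)
  also have "s powr (- of_real \<mu>) * s powr (of_real \<nu> * (- of_real (\<mu> + 1))) = s powr (- of_real (\<nu> + \<nu> * \<mu> + \<mu>))"
  proof -
    have "(- of_real \<mu> + of_real \<nu> * (- of_real (\<mu> + 1)) :: complex) = - of_real (\<nu> + \<nu> * \<mu> + \<mu>)"
      by (simp add: algebra_simps)
    then show ?thesis by (metis cpowr_add)
  qed
  finally show ?thesis unfolding bI_def w_def by (simp add: mult_ac)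
qed

lemma Complex_eq_add: "Complex c y = of_real c + \<i> * of_real y"
  by (simp add: complex_eq_iff)

lemma Fp_measurable:
  "(\<lambda>(u, y). indicat_real {lam..} u *\<^sub>R (complex_of_real ((u - lam) powr \<mu> / Gamma (\<mu> + 1)) * bI t r u \<nu> (Complex c y)))
    \<in> borel_measurable (lborel \<Otimes>\<^sub>M lborel)"
  unfolding bI_def Complex_eq_add by measurable

lemma Fp_bound:
  assumes mu: "0 \<le> \<mu>" "\<mu> \<le> 1" and nu: "0 < \<nu>" "\<nu> < 1" and lam: "0 < lam" and c: "0 < c"
    and u: "lam \<le> u"
  defines "\<delta> \<equiv> kap \<nu> * c powr \<nu> / 2"
  shows "norm (complex_of_real ((u - lam) powr \<mu> / Gamma (\<mu> + 1)) * bI t \<mu> u \<nu> (Complex c y))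
     \<le> ((1 + 2 / \<delta>) / Gamma (\<mu> + 1) * exp (c * t) * c powr (- \<mu>)) * exp (- (\<delta> / 2) * u)
        * exp (- (lam * kap \<nu> / 2) * \<bar>y\<bar> powr \<nu>)"
proof -
  let ?s = "Complex c y"
  have k: "0 < kap \<nu>" using kap_pos nu by simp
  have d: "0 < \<delta>" unfolding \<delta>_def using k c by simp
  have g0: "Gamma (\<mu> + 1) > 0" using mu by (intro Gamma_real_pos) auto
  have s0: "0 < Re ?s" using c by simp
  have ns: "c \<le> norm ?s" "\<bar>y\<bar> \<le> norm ?s" using norm_Complex_ge[of c y] norm_Complex_ge[of y c] c by auto
  have "kap \<nu> * norm ?s powr \<nu> \<le> Re (?s powr of_real \<nu>)"
    unfolding kap_def by (rule Re_cpowr_ge[OF s0]) (use nu in auto)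
  then have ure: "u * (kap \<nu> * norm ?s powr \<nu>) \<le> u * Re (?s powr of_real \<nu>)"
    using u lam by (intro mult_left_mono) auto
  have a1: "(u / 2) * (kap \<nu> * c powr \<nu>) \<le> (u / 2) * (kap \<nu> * norm ?s powr \<nu>)"
    using u lam k ns c nu by (intro mult_left_mono powr_mono2) auto
  have a2: "(lam / 2) * (kap \<nu> * \<bar>y\<bar> powr \<nu>) \<le> (u / 2) * (kap \<nu> * norm ?s powr \<nu>)"
    using u lam k ns nu by (intro mult_mono powr_mono2) auto
  have "\<delta> * u + (lam * kap \<nu> / 2) * \<bar>y\<bar> powr \<nu> \<le> u * Re (?s powr of_real \<nu>)"
    using a1 a2 ure unfolding \<delta>_def by (simp add: algebra_simps)
  then have e1: "exp (- u * Re (?s powr of_real \<nu>)) \<le> exp (- \<delta> * u) * exp (- (lam * kap \<nu> / 2) * \<bar>y\<bar> powr \<nu>)"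
    by (simp add: exp_add[symmetric])
  have p1: "(u - lam) powr \<mu> \<le> (1 + 2 / \<delta>) * exp (\<delta> * u / 2)"
  proof -
    have "(u - lam) powr \<mu> \<le> (1 + 2 / \<delta>) * exp (\<delta> * (u - lam) / 2)"
      by (rule powr_exp_bound) (use u mu d in auto)
    also have "\<dots> \<le> (1 + 2 / \<delta>) * exp (\<delta> * u / 2)"
      using d lam by (intro mult_left_mono) (auto simp: algebra_simps)
    finally show ?thesis .
  qed
  have "norm (complex_of_real ((u - lam) powr \<mu> / Gamma (\<mu> + 1)) * bI t \<mu> u \<nu> ?s)
      = ((u - lam) powr \<mu> / Gamma (\<mu> + 1)) * (exp (c * t) * (norm (?s powr (- of_real \<mu>)) * exp (- u * Re (?s powr of_real \<nu>))))"
    using g0 by (simp add: bI_def norm_mult norm_divide)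
  also have "\<dots> \<le> ((1 + 2 / \<delta>) * exp (\<delta> * u / 2) / Gamma (\<mu> + 1)) * (exp (c * t) * (c powr (- \<mu>) * (exp (- \<delta> * u) * exp (- (lam * kap \<nu> / 2) * \<bar>y\<bar> powr \<nu>))))"
    using p1 e1 norm_powr_neg_le1[OF c mu(1), of y] g0 d
    by (intro mult_mono divide_right_mono) (auto intro!: divide_nonneg_pos add_nonneg_nonneg)
  also have "\<dots> = ((1 + 2 / \<delta>) / Gamma (\<mu> + 1) * exp (c * t) * c powr (- \<mu>)) * exp (- (\<delta> / 2) * u)
        * exp (- (lam * kap \<nu> / 2) * \<bar>y\<bar> powr \<nu>)"
  proof -
    have eq: "exp (\<delta> * u / 2) * exp (- \<delta> * u) = exp (- (\<delta> / 2) * u)" by (simp add: exp_add[symmetric])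
    show ?thesis unfolding eq[symmetric] by (simp only: mult_ac divide_inverse)
  qed
  finally show ?thesis .
qed

lemma Fp_integrable:
  assumes mu: "0 \<le> \<mu>" "\<mu> \<le> 1" and nu: "0 < \<nu>" "\<nu> < 1" and lam: "0 < lam" and c: "0 < c"
  shows "integrable (lborel \<Otimes>\<^sub>M lborel)
     (\<lambda>(u, y). indicat_real {lam..} u *\<^sub>R (complex_of_real ((u - lam) powr \<mu> / Gamma (\<mu> + 1)) * bI t \<mu> u \<nu> (Complex c y)))"
proof -
  define \<delta> where "\<delta> = kap \<nu> * c powr \<nu> / 2"
  define K1 where "K1 = (1 + 2 / \<delta>) / Gamma (\<mu> + 1) * exp (c * t) * c powr (- \<mu>)"
  define \<beta> where "\<beta> = lam * kap \<nu> / 2"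
  define A where "A u = indicat_real {lam..} u * (K1 * exp (- (\<delta> / 2) * u))" for u
  define B where "B y = exp (- \<beta> * \<bar>y\<bar> powr \<nu>)" for y
  have k: "0 < kap \<nu>" using kap_pos nu by simp
  have d: "0 < \<delta>" unfolding \<delta>_def using k c by simp
  have b: "0 < \<beta>" unfolding \<beta>_def using k lam by simp
  have g0: "Gamma (\<mu> + 1) > 0" using mu by (intro Gamma_real_pos) auto
  have K1: "0 \<le> K1" unfolding K1_def using d g0 by (auto intro!: divide_nonneg_pos add_nonneg_nonneg)
  have A0: "0 \<le> A u" for u unfolding A_def using K1 by (simp add: indicator_def)
  have IA: "integrable lborel A"
  proof -
    have "set_integrable lborel {lam..} (\<lambda>u. K1 * exp (- (\<delta> / 2) * u))"
      using set_integrable_exp_neg[of "\<delta> / 2" lam] d by (intro set_integrable_mult_right) auto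
    then show ?thesis unfolding set_integrable_def A_def by simp
  qed
  have IB: "integrable lborel B" unfolding B_def using b nu by (intro integrable_exp_powr) auto
  have IG: "integrable (lborel \<Otimes>\<^sub>M lborel) (\<lambda>(u, y). A u * B y)"
  proof (rule lborel_pair.Fubini_integrable)
    show "(\<lambda>(u, y). A u * B y) \<in> borel_measurable (lborel \<Otimes>\<^sub>M lborel)"
      unfolding A_def B_def by measurable
    have "(\<lambda>u. LBINT y. norm (case (u, y) of (u, y) \<Rightarrow> A u * B y)) = (\<lambda>u. A u * (LBINT y. B y))"
    proof
      fix u
      have "(LBINT y. norm (case (u, y) of (u, y) \<Rightarrow> A u * B y)) = (LBINT y. A u * B y)"
        using A0[of u] by (simp add: B_def abs_mult)
      also have "\<dots> = A u * (LBINT y. B y)" by (rule integral_mult_right_zero)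
      finally show "(LBINT y. norm (case (u, y) of (u, y) \<Rightarrow> A u * B y)) = A u * (LBINT y. B y)" .
    qed
    then show "integrable lborel (\<lambda>u. LBINT y. norm (case (u, y) of (u, y) \<Rightarrow> A u * B y))"
      using IA by (simp add: integrable_mult_left)
    show "AE u in lborel. integrable lborel (\<lambda>y. case (u, y) of (u, y) \<Rightarrow> A u * B y)"
      using IB by (intro AE_I2) simp
  qed
  show ?thesis
  proof (rule Bochner_Integration.integrable_bound[OF IG])
    show "(\<lambda>(u, y). indicat_real {lam..} u *\<^sub>R (complex_of_real ((u - lam) powr \<mu> / Gamma (\<mu> + 1)) * bI t \<mu> u \<nu> (Complex c y)))
      \<in> borel_measurable (lborel \<Otimes>\<^sub>M lborel)" by (rule Fp_measurable)
    show "AE x in lborel \<Otimes>\<^sub>M lborel.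
       norm (case x of (u, y) \<Rightarrow> indicat_real {lam..} u *\<^sub>R (complex_of_real ((u - lam) powr \<mu> / Gamma (\<mu> + 1)) * bI t \<mu> u \<nu> (Complex c y)))
       \<le> norm (case x of (u, y) \<Rightarrow> A u * B y)"
    proof (rule AE_I2, clarify)
      fix u y :: real
      show "norm (indicat_real {lam..} u *\<^sub>R (complex_of_real ((u - lam) powr \<mu> / Gamma (\<mu> + 1)) * bI t \<mu> u \<nu> (Complex c y)))
       \<le> norm (A u * B y)"
      proof (cases "lam \<le> u")
        case True
        have "norm (complex_of_real ((u - lam) powr \<mu> / Gamma (\<mu> + 1)) * bI t \<mu> u \<nu> (Complex c y)) \<le> A u * B y"
          using Fp_bound[OF mu nu lam c True, of t y] True
          unfolding A_def B_def K1_def \<delta>_def \<beta>_def by (simp add: indicator_def)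
        then show ?thesis using True A0[of u] by (simp add: indicator_def B_def abs_mult)
      next
        case False then show ?thesis by (simp add: indicator_def)
      qed
    qed
  qed
qed

lemma lhs_has_integral:
  assumes mu: "0 \<le> \<mu>" "\<mu> \<le> 1" and nu: "0 < \<nu>" "\<nu> < 1" and lam: "0 < lam" and c: "0 < c"
  shows "((\<lambda>u. of_real ((u - lam) powr \<mu> / Gamma (\<mu> + 1)) * K_nm c \<nu> \<mu> t u) has_integral
     bromwich c (\<lambda>s. s powr (- of_real (\<nu> + \<nu> * \<mu> + \<mu>)) * exp (- of_real lam * s powr of_real \<nu>)) t) {lam..}"
proof -
  define P where "P u = complex_of_real ((u - lam) powr \<mu> / Gamma (\<mu> + 1))" for u
  define Fp where "Fp u y = indicat_real {lam..} u *\<^sub>R (P u * bI t \<mu> u \<nu> (Complex c y))" for u y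
  define k0 where "k0 = (1 / (2 * pi * \<i>)) * \<i>"
  define \<phi> where "\<phi> u = of_real ((u - lam) powr \<mu> / Gamma (\<mu> + 1)) * K_nm c \<nu> \<mu> t u" for u
  have IF: "integrable (lborel \<Otimes>\<^sub>M lborel) (\<lambda>(u, y). Fp u y)"
    unfolding Fp_def P_def by (rule Fp_integrable[OF mu nu lam c])
  have Fub: "(LBINT y. LBINT u. Fp u y) = (LBINT u. LBINT y. Fp u y)"
    by (rule lborel_pair.Fubini_integral[OF IF])
  have inner: "(LBINT u. Fp u y) = bI t (\<nu> + \<nu> * \<mu> + \<mu>) lam \<nu> (Complex c y)" for y
    unfolding Fp_def P_def by (rule inner_u_integral[OF _ mu nu lam]) (use c in simp)
  have int_u: "integrable lborel (\<lambda>u. LBINT y. Fp u y)"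
    by (rule lborel_pair.integrable_fst[OF IF])
  have Kn: "K_nm c \<nu> \<mu> t u = (1 / (2 * pi * \<i>)) * ((LBINT y. bI t \<mu> u \<nu> (Complex c y)) * \<i>)" for u
    unfolding K_nm_def by (rule bromwich_bI)
  have pt: "indicat_real {lam..} u *\<^sub>R \<phi> u = k0 * (LBINT y. Fp u y)" for u
  proof -
    have "(LBINT y. Fp u y) = indicat_real {lam..} u *\<^sub>R (LBINT y. P u * bI t \<mu> u \<nu> (Complex c y))"
      unfolding Fp_def by (rule integral_scaleR_right)
    also have "(LBINT y. P u * bI t \<mu> u \<nu> (Complex c y)) = P u * (LBINT y. bI t \<mu> u \<nu> (Complex c y))"
      by (rule integral_mult_right_zero)
    finally show ?thesis unfolding \<phi>_def Kn k0_def P_def by (simp add: mult_ac)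
  qed
  have SI: "set_integrable lborel {lam..} \<phi>"
    unfolding set_integrable_def pt using int_u by (rule integrable_mult_right)
  have "(LINT u:{lam..}|lborel. \<phi> u) = (LBINT u. k0 * (LBINT y. Fp u y))"
    unfolding set_lebesgue_integral_def pt ..
  also have "\<dots> = k0 * (LBINT u. LBINT y. Fp u y)" by (rule integral_mult_right_zero)
  also have "\<dots> = k0 * (LBINT y. bI t (\<nu> + \<nu> * \<mu> + \<mu>) lam \<nu> (Complex c y))"
    unfolding Fub[symmetric] inner ..
  also have "\<dots> = bromwich c (\<lambda>s. s powr (- of_real (\<nu> + \<nu> * \<mu> + \<mu>)) * exp (- of_real lam * s powr of_real \<nu>)) t"
    unfolding bromwich_bI k0_def by (simp add: mult_ac)
  finally have V: "(LINT u:{lam..}|lborel. \<phi> u) = bromwich c (\<lambda>s. s powr (- of_real (\<nu> + \<nu> * \<mu> + \<mu>)) * exp (- of_real lam * s powr of_real \<nu>)) t" .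
  have H0: "(\<phi> has_integral integral {lam..} \<phi>) {lam..}"
    by (rule integrable_integral[OF set_borel_integral_eq_integral(1)[OF SI]])
  have E: "integral {lam..} \<phi> = (LINT u:{lam..}|lborel. \<phi> u)"
    by (rule set_borel_integral_eq_integral(2)[OF SI, symmetric])
  have "(\<phi> has_integral bromwich c (\<lambda>s. s powr (- of_real (\<nu> + \<nu> * \<mu> + \<mu>)) * exp (- of_real lam * s powr of_real \<nu>)) t) {lam..}"
    using H0 unfolding E V .
  then show ?thesis unfolding \<phi>_def .
qed

theorem mainTheorem8:
  fixes \<nu> \<mu> lam t c1 c2 :: real
  assumes "0 < \<nu>" "\<nu> < 1" "0 \<le> \<mu>" "\<mu> < 1" "0 < lam" "0 < t" "0 < c1" "0 < c2"
  shows "((\<lambda>u. of_real ((u - lam) powr \<mu> / Gamma (\<mu> + 1)) * K_nm c1 \<nu> \<mu> t u)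
           has_integral
          (of_real (lam powr ((1 / \<nu> + 1) * \<mu> - 1 / \<nu> + 1))
             * f_nr c2 \<nu> (\<nu> + \<nu> * \<mu> + \<mu>) (t / lam powr (1 / \<nu>)))) {lam..}"
proof -
  note nu = assms(1,2) and lam = assms(5) and c1 = assms(7) and c2 = assms(8)
  have mu: "0 \<le> \<mu>" "\<mu> \<le> 1" using assms(3,4) by auto
  define \<rho> where "\<rho> = \<nu> + \<nu> * \<mu> + \<mu>"
  have rho: "0 < \<rho>" unfolding \<rho>_def using nu mu by (simp add: add_pos_nonneg)
  define a where "a = lam powr (1 / \<nu>)"
  have a: "0 < a" unfolding a_def using lam by simp
  have anu: "a powr \<nu> = lam" unfolding a_def using lam nu by (simp add: powr_powr)
  define Gl where "Gl = (\<lambda>s::complex. s powr (- of_real \<rho>) * exp (- of_real lam * s powr of_real \<nu>))"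
  have H: "((\<lambda>u. of_real ((u - lam) powr \<mu> / Gamma (\<mu> + 1)) * K_nm c1 \<nu> \<mu> t u) has_integral bromwich c1 Gl t) {lam..}"
    unfolding Gl_def \<rho>_def by (rule lhs_has_integral[OF mu nu lam c1])
  have S: "bromwich c1 Gl t = bromwich (c2 / a) Gl t"
    unfolding Gl_def by (rule bromwich_shift) (use c1 c2 a rho lam nu in auto)
  have Sc: "f_nr c2 \<nu> \<rho> (t / a) = of_real (a powr (1 - \<rho>)) * bromwich (c2 / a) Gl t"
    using bromwich_scale[OF a, of c2 \<nu> \<rho> t] unfolding Gl_def anu .
  have ap: "a powr (\<rho> - 1) * a powr (1 - \<rho>) = 1" using a by (simp add: powr_add[symmetric])
  have B: "bromwich (c2 / a) Gl t = of_real (a powr (\<rho> - 1)) * f_nr c2 \<nu> \<rho> (t / a)"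
    unfolding Sc by (simp add: mult.assoc[symmetric] of_real_mult[symmetric] ap)
  have E: "a powr (\<rho> - 1) = lam powr ((1 / \<nu> + 1) * \<mu> - 1 / \<nu> + 1)"
  proof -
    have "a powr (\<rho> - 1) = lam powr (1 / \<nu> * (\<rho> - 1))" unfolding a_def using lam by (simp add: powr_powr)
    also have "1 / \<nu> * (\<rho> - 1) = (1 / \<nu> + 1) * \<mu> - 1 / \<nu> + 1"
      unfolding \<rho>_def using nu by (simp add: field_simps)
    finally show ?thesis .
  qed
  have H2: "((\<lambda>u. of_real ((u - lam) powr \<mu> / Gamma (\<mu> + 1)) * K_nm c1 \<nu> \<mu> t u) has_integral
      (of_real (a powr (\<rho> - 1)) * f_nr c2 \<nu> \<rho> (t / a))) {lam..}"
    using H unfolding S B .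
  then show ?thesis unfolding E unfolding a_def \<rho>_def .
qed

end
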